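(* Let $\theta\in[\frac{\pi}{2},\frac{2\pi}{3}]$ and $z=e^{i\theta}$, and let $D=\{\tau\in\mathbb{H}:|\operatorname{Re}\tau|\le\frac12,\ \operatorname{Im}\tau>\frac25\}$. If $\tau\in D$ and $\tau=\gamma.z$ for some $\gamma\in\mathrm{PSL}_2(\mathbb{Z})$ (acting by Möbius transformations), then $\tau\in\{z,\,-1/z,\,\frac{-1}{z+1},\,\frac{z}{z+1},\,\frac{-1}{z-1},\,\frac{-z}{z-1}\}$.
   Context: $\mathbb{H}$ is the upper half plane; $\begin{pmatrix}a&b\\c&d\end{pmatrix}\in\mathrm{PSL}_2(\mathbb{Z})$ acts by $\tau\mapsto\frac{a\tau+b}{c\tau+d}$. *)

theory Defs
  imports "HOL-Analysis.Analysis"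
begin

text \<open>Mobius action of an integer matrix (a b; c d) on the complex plane.
  An element of PSL_2(Z) is represented by a matrix of determinant 1;
  both lifts give the same action.\<close>
definition moebius_int :: "int \<Rightarrow> int \<Rightarrow> int \<Rightarrow> int \<Rightarrow> complex \<Rightarrow> complex" where
  "moebius_int a b c d \<tau> = (of_int a * \<tau> + of_int b) / (of_int c * \<tau> + of_int d)"

definition regionD :: "complex set" where
  "regionD = {\<tau>. Im \<tau> > 0 \<and> \<bar>Re \<tau>\<bar> \<le> 1/2 \<and> Im \<tau> > 2/5}"

end

theory Submission imports Defs begin

lemma famA: fixes z :: complex and n :: int
  assumes "Re z ^ 2 + Im z ^ 2 = 1" "-1/2 \<le> Re z" "Re z \<le> 0" "Im z > 0"
   "\<bar>Re (of_int n + z)\<bar> \<le> 1/2"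
  shows "of_int n + z \<in> {z, -1/z, -1/(z+1), z/(z+1), -1/(z-1), -z/(z-1)}"
proof -
  have h: "\<bar>real_of_int n + Re z\<bar> \<le> 1/2" using assms(5) by simp
  have "real_of_int n > -1" "real_of_int n < 2" using h assms unfolding abs_le_iff by linarith+
  hence "n > -1" "n < 2" by simp_all
  hence "n = 0 \<or> n = 1" by auto
  moreover have "n = 1 \<Longrightarrow> of_int n + z = -1/z"
  proof -
    assume n: "n = 1"
    hence x: "Re z = -1/2" using assms h unfolding abs_le_iff by auto
    show ?thesis using n x assms(1) by (simp add: complex_eq_iff Re_divide Im_divide power2_eq_square)
  qed
  ultimately show ?thesis by auto
qed

lemma famB: fixes z :: complex and n :: int
  assumes "Re z ^ 2 + Im z ^ 2 = 1" "-1/2 \<le> Re z" "Re z \<le> 0" "Im z > 0"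
   "\<bar>Re (of_int n - 1/z)\<bar> \<le> 1/2"
  shows "of_int n - 1/z \<in> {z, -1/z, -1/(z+1), z/(z+1), -1/(z-1), -z/(z-1)}"
proof -
  have r: "Re (of_int n - 1/z) = n - Re z" using assms(1) by (simp add: Re_divide)
  have "real_of_int n < 1" "real_of_int n > -2" using assms(2,3,5) unfolding r abs_le_iff by linarith+
  hence "n < 1" "n > -2" by simp_all
  hence "n = 0 \<or> n = -1" by auto
  moreover have "n = -1 \<Longrightarrow> of_int n - 1/z = z"
  proof -
    assume n: "n = -1"
    hence x: "Re z = -1/2" using assms(2,3,5) unfolding r abs_le_iff by auto
    show ?thesis using n x assms(1) by (simp add: complex_eq_iff Re_divide Im_divide power2_eq_square)
  qed
  ultimately show ?thesis by auto
qed

lemma famC: fixes z :: complex and n :: int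
  assumes "Re z ^ 2 + Im z ^ 2 = 1" "-1/2 \<le> Re z" "Re z \<le> 0" "Im z > 0"
   "\<bar>Re (of_int n - 1/(z+1))\<bar> \<le> 1/2"
  shows "of_int n - 1/(z+1) \<in> {z, -1/z, -1/(z+1), z/(z+1), -1/(z-1), -z/(z-1)}"
proof -
  have d: "(Re z + 1)^2 + Im z ^ 2 = 2 * (Re z + 1)" using assms(1) by (simp add: power2_eq_square algebra_simps)
  have "Re (1/(z+1)) = (Re z + 1) / (2 * (Re z + 1))" by (simp add: Re_divide d)
  also have "\<dots> = 1/2" using assms(2) by simp
  finally have r: "Re (of_int n - 1/(z+1)) = n - 1/2" by simp
  have "real_of_int n > -1" "real_of_int n < 2" using assms(2,3,5) unfolding r abs_le_iff by linarith+
  hence "n > -1" "n < 2" by simp_all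
  hence "n = 0 \<or> n = 1" by auto
  moreover have "of_int 1 - 1/(z+1) = z/(z+1)"
  proof -
    have "z + 1 \<noteq> 0" using assms(4) by (auto simp: complex_eq_iff)
    thus ?thesis by (simp add: field_simps)
  qed
  ultimately show ?thesis by auto
qed

lemma famD: fixes z :: complex and n :: int
  assumes "Re z ^ 2 + Im z ^ 2 = 1" "-1/2 \<le> Re z" "Re z \<le> 0" "Im z > 0"
   "\<bar>Re (of_int n - 1/(z-1))\<bar> \<le> 1/2"
  shows "of_int n - 1/(z-1) \<in> {z, -1/z, -1/(z+1), z/(z+1), -1/(z-1), -z/(z-1)}"
proof -
  have d: "(Re z - 1)^2 + Im z ^ 2 = 2 * (1 - Re z)" using assms(1) by (simp add: power2_eq_square algebra_simps)
  have "Re (1/(z-1)) = (Re z - 1) / (2 * (1 - Re z))" by (simp add: Re_divide d)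
  also have "\<dots> = -1/2" using assms(3) by (simp add: field_simps)
  finally have r: "Re (of_int n - 1/(z-1)) = n + 1/2" by simp
  have "real_of_int n < 1" "real_of_int n > -2" using assms(2,3,5) unfolding r abs_le_iff by linarith+
  hence "n < 1" "n > -2" by simp_all
  hence "n = 0 \<or> n = -1" by auto
  moreover have "of_int (-1) - 1/(z-1) = -z/(z-1)"
  proof -
    have "z - 1 \<noteq> 0" using assms(4) by (auto simp: complex_eq_iff)
    thus ?thesis by (simp add: field_simps)
  qed
  ultimately show ?thesis by auto
qed

lemma cd_bound1: fixes p q :: int assumes "p*p + q*q - p*q \<le> 2" "p \<ge> 0" "q \<ge> 0" shows "p \<le> 1"
proof (rule ccontr)
  assume "\<not> p \<le> 1"
  hence "p*p \<ge> 2*2" using mult_mono[of 2 p 2 p] by simp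
  have "(2*q-p)*(2*q-p) \<ge> 0" by simp
  thus False using assms \<open>p*p \<ge> 2*2\<close> by (simp add: algebra_simps)
qed

lemma cd_bound: fixes c d :: int assumes "c*c + d*d - \<bar>c*d\<bar> \<le> 2" shows "\<bar>c\<bar> \<le> 1 \<and> \<bar>d\<bar> \<le> 1"
proof -
  have e: "c*c = \<bar>c\<bar>*\<bar>c\<bar>" "d*d = \<bar>d\<bar>*\<bar>d\<bar>" "\<bar>c*d\<bar> = \<bar>c\<bar>*\<bar>d\<bar>" by (auto simp: abs_mult)
  show ?thesis using cd_bound1[of "\<bar>c\<bar>" "\<bar>d\<bar>"] cd_bound1[of "\<bar>d\<bar>" "\<bar>c\<bar>"] assms unfolding e by (auto simp: algebra_simps)
qed

theorem lemma3p8: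
  fixes \<theta> :: real and z \<tau> :: complex
  assumes "pi / 2 \<le> \<theta>" and "\<theta> \<le> 2 * pi / 3"
    and "z = exp (\<i> * of_real \<theta>)"
    and "\<tau> \<in> regionD"
    and "\<exists>a b c d :: int. a * d - b * c = 1 \<and> \<tau> = moebius_int a b c d z"
  shows "\<tau> \<in> {z, -1/z, -1/(z+1), z/(z+1), -1/(z-1), -z/(z-1)}"
proof -
  obtain a b c d :: int where det: "a * d - b * c = 1" and tau: "\<tau> = moebius_int a b c d z"
    using assms(5) by blast
  have z: "z = cis \<theta>" using assms(3) by (simp add: cis_conv_exp)
  define x where "x = Re z"
  define y where "y = Im z"
  have xc: "x = cos \<theta>" and ys: "y = sin \<theta>" using z x_def y_def by simp_all
  have pyth: "x^2 + y^2 = 1" using xc ys by simp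
  have "cos \<theta> \<le> cos (pi/2)" using assms(1,2) by (subst cos_mono_le_eq) auto
  hence x0: "x \<le> 0" using xc by simp
  have "cos (2*pi/3) \<le> cos \<theta>" using assms(1,2) by (subst cos_mono_le_eq) auto
  moreover have "cos (2*pi/3) = -1/2"
  proof -
    have "cos (2*pi/3) = cos (pi - pi/3)" by (simp add: field_simps)
    also have "\<dots> = -1/2" by (simp only: cos_pi_minus cos_60)
    finally show ?thesis .
  qed
  ultimately have x1: "-1/2 \<le> x" using xc by simp
  have "0 < \<theta>" "\<theta> < pi" using assms(1,2) pi_gt_zero by linarith+
  hence y0: "y > 0" using ys by (simp add: sin_gt_zero)
  have y1: "y \<le> 1" using ys by simp
  define N where "N = (c*x+d)^2 + (c*y)^2"
  have Nre: "(Re (of_int c * z + of_int d))^2 + (Im (of_int c * z + of_int d))^2 = N"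
    by (simp add: N_def x_def y_def)
  have Npos: "N > 0"
  proof (cases "c = 0")
    case True
    then have "d \<noteq> 0" using det by auto
    then show ?thesis using True by (simp add: N_def)
  next
    case False
    then have "(c*y)^2 > 0" using y0 by simp
    then show ?thesis unfolding N_def by (smt (verit) zero_le_power2)
  qed
  have "Im \<tau> = (a*d - b*c) * y / N"
    unfolding tau moebius_int_def Im_divide Nre by (simp add: x_def y_def algebra_simps)
  hence imt: "Im \<tau> = y / N" using det by simp
  have "Im \<tau> > 2/5" using assms(4) by (simp add: regionD_def)
  hence "2 * N < 5 * y" using Npos imt by (simp add: field_simps)
  hence N5: "2 * N < 5" using y1 by linarith
  have Nexp: "N = c*c + 2*c*d*x + d*d"
  proof -
    have "N = c*c*(x^2+y^2) + 2*c*d*x + d*d" by (simp add: N_def power2_eq_square algebra_simps)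
    thus ?thesis using pyth by simp
  qed
  have "\<bar>2*c*d*x\<bar> \<le> real_of_int \<bar>c*d\<bar>"
  proof -
    have "\<bar>2*c*d*x\<bar> = real_of_int \<bar>c*d\<bar> * (2*\<bar>x\<bar>)" by (simp add: abs_mult)
    also have "\<dots> \<le> real_of_int \<bar>c*d\<bar> * 1" using x0 x1 by (intro mult_left_mono) auto
    finally show ?thesis by simp
  qed
  hence "real_of_int (c*c + d*d - \<bar>c*d\<bar>) < 3" using N5 Nexp by simp
  hence "c*c + d*d - \<bar>c*d\<bar> \<le> 2" by linarith
  hence cdb: "\<bar>c\<bar> \<le> 1 \<and> \<bar>d\<bar> \<le> 1" by (rule cd_bound)
  have re: "\<bar>Re \<tau>\<bar> \<le> 1/2" using assms(4) by (simp add: regionD_def)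
  have zh: "Re z ^ 2 + Im z ^ 2 = 1" "-1/2 \<le> Re z" "Re z \<le> 0" "Im z > 0"
    using pyth x0 x1 y0 by (simp_all add: x_def y_def)
  have z0: "z \<noteq> 0" using y0 y_def by auto
  have zp: "z + 1 \<noteq> 0" using y0 y_def by (auto simp: complex_eq_iff)
  have zm: "z - 1 \<noteq> 0" using y0 y_def by (auto simp: complex_eq_iff)
  have zm': "1 - z \<noteq> 0" using y0 y_def by (auto simp: complex_eq_iff)
  have "c \<in> {-1,0,1}" "d \<in> {-1,0,1}" using cdb by auto
  then consider "c = 0" "d = 1" | "c = 0" "d = -1" | "c = 1" "d = 0" | "c = -1" "d = 0"
    | "c = 1" "d = 1" | "c = -1" "d = -1" | "c = 1" "d = -1" | "c = -1" "d = 1"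
    | "c = 0" "d = 0" by auto
  then show ?thesis
  proof cases
    case 1
    hence "\<tau> = of_int b + z" using det tau by (simp add: moebius_int_def)
    thus ?thesis using famA[OF zh, of b] re by simp
  next
    case 2
    hence "\<tau> = of_int (-b) + z" using det tau by (simp add: moebius_int_def)
    thus ?thesis using famA[OF zh, of "-b"] re by simp
  next
    case 3
    hence "\<tau> = of_int a - 1/z" using det tau z0 by (simp add: moebius_int_def field_simps)
    thus ?thesis using famB[OF zh, of a] re by simp
  next
    case 4
    hence "\<tau> = of_int (-a) - 1/z" using det tau z0 by (simp add: moebius_int_def field_simps) (metis add.commute add_eq_0_iff eq_neg_iff_add_eq_0 add.assoc)
    thus ?thesis using famB[OF zh, of "-a"] re by simp
  next
    case 5
    hence "b = a - 1" using det by simp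
    hence bb: "complex_of_int b = of_int a - 1" by simp
    have "\<tau> = (of_int a * z + (of_int a - 1)) / (z + 1)" using tau 5 bb by (simp add: moebius_int_def)
    also have "\<dots> = of_int a - 1/(z+1)" using zp by (simp add: field_simps)
    finally show ?thesis using famC[OF zh, of a] re by simp
  next
    case 6
    have "- z - 1 \<noteq> 0" using zp by (metis add.inverse_inverse diff_conv_add_uminus minus_add_distrib neg_equal_0_iff_equal)
    have "b = a + 1" using 6 det by simp
    hence bb: "complex_of_int b = of_int a + 1" by simp
    have "\<tau> = (of_int a * z + (of_int a + 1)) / (- z - 1)" using tau 6 bb by (simp add: moebius_int_def)
    also have "\<dots> = of_int (-a) - 1/(z+1)" using zp \<open>- z - 1 \<noteq> 0\<close> by (simp add: field_simps)
    finally show ?thesis using famC[OF zh, of "-a"] re by simp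
  next
    case 7
    hence "b = -1 - a" using det by simp
    hence bb: "complex_of_int b = -1 - of_int a" by simp
    have "\<tau> = (of_int a * z + (-1 - of_int a)) / (z - 1)" using tau 7 bb by (simp add: moebius_int_def)
    also have "\<dots> = of_int a - 1/(z-1)" using zm by (simp add: field_simps)
    finally show ?thesis using famD[OF zh, of a] re by simp
  next
    case 8
    have "- z + 1 \<noteq> 0" using zm' by simp
    have "b = 1 - a" using 8 det by simp
    hence bb: "complex_of_int b = 1 - of_int a" by simp
    have "\<tau> = (of_int a * z + (1 - of_int a)) / (- z + 1)" using tau 8 bb by (simp add: moebius_int_def)
    also have "\<dots> = of_int (-a) - 1/(z-1)" using zm zm' \<open>- z + 1 \<noteq> 0\<close> by (simp add: field_simps)
    finally show ?thesis using famD[OF zh, of "-a"] re by simp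
  next
    case 9
    thus ?thesis using det by simp
  qed
qed

end
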